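(* Let $n, r$ be positive integers and let $c: E(G)\to\mathbb{R}$ be a proper edge coloring of a graph $G$. Then there is a proper edge coloring $\widehat{c}: E(G\square K_n)\to\mathbb{R}$ such that $$\dim W_{\widehat{c}}(G\square K_n, r)\geqslant\sum_{t=0}^{n-1}\dim W_c(G, r-t),$$ where $W_c(G, i)$ is defined to be $\{0\}$ if $i\leqslant0$.
   Context: All graphs are finite, simple and undirected; $K_n$ is the complete graph on $n$ vertices. The Cartesian product $G\square H$ has vertex set $V(G)\times V(H)$, with $(g_1,h_1)$ adjacent to $(g_2,h_2)$ iff either $g_1=g_2$ and $h_1h_2\in E(H)$, or $h_1=h_2$ and $g_1g_2\in E(G)$. For a positive integer $r$ and a graph $G$ with a proper edge coloring $c: E(G)\to\mathbb{R}$, $W_c(G,r)$ is the real vector space of all functions $\phi: E(G)\to\mathbb{R}$ for which there exist real polynomials $\{P_v(x)\}_{v\in V(G)}$ with $\deg P_v\leqslant r-1$ for every vertex $v$ and $P_u(c(uv))=P_v(c(uv))=\phi(uv)$ for every edge $uv\in E(G)$. *)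

theory Defs
  imports Main "HOL-Library.Function_Algebras" "HOL-Computational_Algebra.Polynomial"
begin

definition simple_graph :: "'a set \<Rightarrow> 'a set set \<Rightarrow> bool" where
  "simple_graph V E \<longleftrightarrow> finite V \<and>
     (\<forall>e\<in>E. \<exists>u v. e = {u, v} \<and> u \<noteq> v \<and> u \<in> V \<and> v \<in> V)"

definition K_verts :: "nat \<Rightarrow> nat set" where
  "K_verts n = {0..<n}"

definition K_edges :: "nat \<Rightarrow> nat set set" where
  "K_edges n = {{i, j} | i j. i < n \<and> j < n \<and> i \<noteq> j}"

definition cart_verts :: "'a set \<Rightarrow> 'b set \<Rightarrow> ('a \<times> 'b) set" where
  "cart_verts V1 V2 = V1 \<times> V2"

definition cart_edges ::
  "'a set \<Rightarrow> 'a set set \<Rightarrow> 'b set \<Rightarrow> 'b set set \<Rightarrow> ('a \<times> 'b) set set" where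
  "cart_edges V1 E1 V2 E2 =
     {{(g, h1), (g, h2)} | g h1 h2. g \<in> V1 \<and> {h1, h2} \<in> E2} \<union>
     {{(g1, h), (g2, h)} | g1 g2 h. h \<in> V2 \<and> {g1, g2} \<in> E1}"

definition proper_edge_coloring :: "'a set set \<Rightarrow> ('a set \<Rightarrow> real) \<Rightarrow> bool" where
  "proper_edge_coloring E c \<longleftrightarrow>
     (\<forall>e\<in>E. \<forall>f\<in>E. e \<noteq> f \<and> e \<inter> f \<noteq> {} \<longrightarrow> c e \<noteq> c f)"

definition W :: "'a set \<Rightarrow> 'a set set \<Rightarrow> ('a set \<Rightarrow> real) \<Rightarrow> int \<Rightarrow> ('a set \<Rightarrow> real) set" where
  "W V E c r =
    (if r \<le> 0 then {0} else
     {\<phi>. (\<forall>e. e \<notin> E \<longrightarrow> \<phi> e = 0) \<and>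
          (\<exists>P :: 'a \<Rightarrow> real poly.
             (\<forall>v\<in>V. int (degree (P v)) \<le> r - 1) \<and>
             (\<forall>u v. {u, v} \<in> E \<longrightarrow>
                 poly (P u) (c {u, v}) = \<phi> {u, v} \<and> poly (P v) (c {u, v}) = \<phi> {u, v}))})"

definition fdim :: "('b \<Rightarrow> real) set \<Rightarrow> nat" where
  "fdim S = vector_space.dim (\<lambda>(a::real) f x. a * f x) S"

end

theory Submission
  imports Defs
begin

lemma vs_fun: "vector_space (\<lambda>(a::real) (f::'x \<Rightarrow> real) x. a * f x)"
  by unfold_locales (auto simp: fun_eq_iff algebra_simps)
global_interpretation FV: vector_space "\<lambda>(a::real) (f::'x \<Rightarrow> real) x. a * f x"
  by (rule vs_fun)
lemma fdim_eq: "fdim S = FV.dim S" by (simp add: fdim_def)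

lemma sum_fun_apply: "(\<Sum>i\<in>A. f i) x = (\<Sum>i\<in>A. f i x)"
  by (induct A rule: infinite_finite_induct) auto

lemma fin_supp_span:
  fixes S :: "('x \<Rightarrow> real) set"
  assumes "finite F" "\<And>f x. f \<in> S \<Longrightarrow> x \<notin> F \<Longrightarrow> f x = 0"
  shows "S \<subseteq> FV.span ((\<lambda>y x. if x = y then 1 else 0) ` F)"
proof
  fix f assume f: "f \<in> S"
  have eq: "f = (\<Sum>y\<in>F. (\<lambda>x. f y * (if x = y then 1 else 0)))"
  proof
    fix x
    show "f x = (\<Sum>y\<in>F. (\<lambda>x. f y * (if x = y then 1 else 0))) x"
      unfolding sum_fun_apply using assms f
      by (cases "x \<in> F") (auto simp: if_distrib cong: if_cong)
  qed
  show "f \<in> FV.span ((\<lambda>y x. if x = y then 1 else 0) ` F)"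
  proof (subst eq, rule FV.span_sum)
    fix y assume y: "y \<in> F"
    have "(\<lambda>x. if x = y then 1 else (0::real)) \<in> FV.span ((\<lambda>y x. if x = y then 1 else 0) ` F)"
      by (rule FV.span_base) (use y in auto)
    from FV.span_scale[OF this, of "f y"]
    show "(\<lambda>x. f y * (if x = y then 1 else 0)) \<in> FV.span ((\<lambda>y x. if x = y then 1 else 0) ` F)"
      by simp
  qed
qed

lemma fin_supp_basis:
  fixes S :: "('x \<Rightarrow> real) set"
  assumes "finite F" "\<And>f x. f \<in> S \<Longrightarrow> x \<notin> F \<Longrightarrow> f x = 0"
  obtains B where "finite B" "B \<subseteq> S" "FV.independent B" "S \<subseteq> FV.span B" "card B = FV.dim S"
proof -
  obtain B where B: "B \<subseteq> S" "FV.independent B" "S \<subseteq> FV.span B" "card B = FV.dim S"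
    using FV.basis_exists by blast
  have sp: "S \<subseteq> FV.span ((\<lambda>y x. if x = y then 1 else (0::real)) ` F)"
    by (rule fin_supp_span) (use assms in auto)
  have "finite B" using FV.independent_span_bound[OF finite_imageI[OF assms(1)] B(2)]
      sp B(1) FV.span_mono by blast
  then show ?thesis using that B by blast
qed

lemma fin_supp_card_le:
  fixes S :: "('x \<Rightarrow> real) set"
  assumes "finite F" "\<And>f x. f \<in> S \<Longrightarrow> x \<notin> F \<Longrightarrow> f x = 0"
    and "FV.independent I" "I \<subseteq> S"
  shows "card I \<le> FV.dim S"
proof -
  obtain B where B: "finite B" "B \<subseteq> S" "FV.independent B" "S \<subseteq> FV.span B" "card B = FV.dim S"
    by (rule fin_supp_basis[of F S]) (use assms in auto)
  show ?thesis using FV.independent_span_bound[OF B(1) assms(3)] B assms(4) by auto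
qed

lemma fam_indep:
  fixes f :: "'i \<Rightarrow> 'x \<Rightarrow> real"
  assumes "finite I"
    and H: "\<And>a. (\<Sum>i\<in>I. (\<lambda>x. a i * f i x)) = 0 \<Longrightarrow> \<forall>i\<in>I. a i = 0"
  shows "FV.independent (f ` I) \<and> inj_on f I"
proof -
  have inj: "inj_on f I"
  proof (rule inj_onI, rule ccontr)
    fix i j assume ij: "i \<in> I" "j \<in> I" "f i = f j" "i \<noteq> j"
    define a where "a k = (if k = i then 1 else if k = j then -1 else (0::real))" for k
    have "(\<Sum>k\<in>I. (\<lambda>x. a k * f k x)) = (\<Sum>k\<in>{i,j}. (\<lambda>x. a k * f k x))"
      by (rule sum.mono_neutral_right) (use assms(1) ij in \<open>auto simp: a_def\<close>)
    also have "\<dots> = 0" using ij by (auto simp: a_def fun_eq_iff)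
    finally have "a i = 0" using H ij by blast
    then show False by (simp add: a_def)
  qed
  have "\<not> FV.dependent (f ` I)"
  proof
    assume "FV.dependent (f ` I)"
    then obtain u where u: "\<exists>v\<in>f ` I. u v \<noteq> 0" "(\<Sum>v\<in>f ` I. (\<lambda>x. u v * v x)) = 0"
      using FV.dependent_finite[of "f ` I"] assms(1) by blast
    have "(\<Sum>i\<in>I. (\<lambda>x. u (f i) * f i x)) = 0"
      using u(2) by (simp add: sum.reindex[OF inj])
    then have "\<forall>i\<in>I. u (f i) = 0" by (rule H)
    then show False using u(1) by auto
  qed
  then show ?thesis using inj by blast
qed

lemma vandermonde0:
  fixes d y :: "nat \<Rightarrow> real"
  assumes "inj_on y {..<n}" "\<And>h. h < n \<Longrightarrow> (\<Sum>t<n. d t * y h ^ t) = 0"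
    and "t < n"
  shows "d t = 0"
proof -
  define p where "p = (\<Sum>s<n. monom (d s) s)"
  have "degree p \<le> n - 1" unfolding p_def
    by (rule degree_sum_le) (auto intro: order.trans[OF degree_monom_le])
  then have dp: "degree p < card (y ` {..<n})" using assms(1,3) by (simp add: card_image)
  have "p = 0"
    by (rule poly_eqI_degree[OF _ dp]) (use assms(2) dp in \<open>auto simp: p_def poly_sum poly_monom\<close>)
  then have "coeff p t = 0" by simp
  then show ?thesis using assms(3) by (simp add: p_def coeff_sum)
qed


lemma E_edge:
  assumes "simple_graph V E" "{a,b} \<in> E"
  shows "a \<noteq> b \<and> a \<in> V \<and> b \<in> V"
proof -
  obtain u v where "{a,b} = {u,v}" "u \<noteq> v" "u \<in> V" "v \<in> V"
    using assms unfolding simple_graph_def by blast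
  then show ?thesis by (auto simp: doubleton_eq_iff)
qed

lemma E_form:
  assumes "simple_graph V E" "e \<in> E"
  obtains u v where "e = {u,v}" "u \<noteq> v" "u \<in> V" "v \<in> V"
proof -
  have "\<forall>e\<in>E. \<exists>u v. e = {u, v} \<and> u \<noteq> v \<and> u \<in> V \<and> v \<in> V"
    using assms(1) by (simp add: simple_graph_def)
  then have "\<exists>u v. e = {u, v} \<and> u \<noteq> v \<and> u \<in> V \<and> v \<in> V" using assms(2) by (rule bspec)
  then show ?thesis using that by (elim exE conjE) 
qed

lemma edge_cases:
  assumes "simple_graph V E" "e' \<in> cart_edges V E (K_verts n) (K_edges n)"
  obtains (K) g i j where "e' = {(g,i),(g,j)}" "g \<in> V" "i < n" "j < n" "i \<noteq> j"
    | (G) g1 g2 h where "e' = {(g1,h),(g2,h)}" "{g1,g2} \<in> E" "g1 \<noteq> g2" "g1 \<in> V" "g2 \<in> V" "h < n"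
proof -
  from assms(2) consider
      (K) g h1 h2 where "e' = {(g,h1),(g,h2)}" "g \<in> V" "{h1,h2} \<in> K_edges n"
    | (G) g1 g2 h where "e' = {(g1,h),(g2,h)}" "h \<in> K_verts n" "{g1,g2} \<in> E"
    unfolding cart_edges_def by blast
  then show ?thesis
  proof cases
    case K
    then obtain i j where "{h1,h2} = {i,j}" "i < n" "j < n" "i \<noteq> j"
      unfolding K_edges_def by blast
    then have "h1 < n" "h2 < n" "h1 \<noteq> h2" by (auto simp: doubleton_eq_iff)
    then show ?thesis using K that(1)[of g h1 h2] by simp
  next
    case G
    then show ?thesis using E_edge[OF assms(1) G(3)] that(2)[of g1 h g2]
      by (simp add: K_verts_def)
  qed
qed

lemma G_edge_in:
  assumes "{g1,g2} \<in> E" "h < n"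
  shows "{(g1,h),(g2,h)} \<in> cart_edges V E (K_verts n) (K_edges n)"
  unfolding cart_edges_def K_verts_def
  by (intro UnI2 CollectI exI[of _ g1] exI[of _ g2] exI[of _ h]) (use assms in simp)

lemma cart_edges_sub:
  assumes "simple_graph V E" "e' \<in> cart_edges V E (K_verts n) (K_edges n)"
  shows "e' \<subseteq> V \<times> {..<n}"
  using assms by (cases rule: edge_cases) auto

definition colr :: "real \<Rightarrow> ('a set \<Rightarrow> real) \<Rightarrow> ('a \<times> nat) set \<Rightarrow> real" where
  "colr M c e = (if card (fst ` e) = 1 then M + real (\<Sum> (snd ` e)) else c (fst ` e))"

lemma colr_K: "i \<noteq> j \<Longrightarrow> colr M c {(g,i),(g,j)} = M + real i + real j"
  by (simp add: colr_def)

lemma colr_G: "g1 \<noteq> g2 \<Longrightarrow> colr M c {(g1,h),(g2,h)} = c {g1,g2}"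
  by (simp add: colr_def)

lemma sums_ne:
  fixes i j i' j' :: nat
  assumes "i \<noteq> j" "i' \<noteq> j'" "{i,j} \<noteq> {i',j'}" "{i,j} \<inter> {i',j'} \<noteq> {}"
  shows "i + j \<noteq> i' + j'"
  using assms by (auto simp: doubleton_eq_iff)

lemma colr_proper:
  assumes sg: "simple_graph V E" and pc: "proper_edge_coloring E c"
    and M: "\<And>e. e \<in> E \<Longrightarrow> c e < M"
  shows "proper_edge_coloring (cart_edges V E (K_verts n) (K_edges n)) (colr M c)"
  unfolding proper_edge_coloring_def
proof (intro ballI impI)
  fix e f assume e: "e \<in> cart_edges V E (K_verts n) (K_edges n)"
    and f: "f \<in> cart_edges V E (K_verts n) (K_edges n)" and ef: "e \<noteq> f \<and> e \<inter> f \<noteq> {}"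
  from sg e show "colr M c e \<noteq> colr M c f"
  proof (cases rule: edge_cases)
    case eK: (K g i j)
    from sg f show ?thesis
    proof (cases rule: edge_cases)
      case fK: (K g' i' j')
      obtain x where x: "x \<in> e" "x \<in> f" using ef by auto
      have gg: "g = g'" using x eK(1) fK(1) by auto
      have n1: "{i,j} \<inter> {i',j'} \<noteq> {}" using x eK(1) fK(1) by auto
      have n2: "{i,j} \<noteq> {i',j'}"
      proof
        assume "{i,j} = {i',j'}"
        then have "e = f" using eK(1) fK(1) gg by (auto simp: doubleton_eq_iff)
        with ef show False by simp
      qed
      from sums_ne[OF eK(5) fK(5) n2 n1] show ?thesis
        using eK(1,5) fK(1,5) by (simp add: colr_K)
    next
      case fG: (G g1 g2 h)
      show ?thesis using eK(1,5) fG(1,2,3) M[OF fG(2)] by (simp add: colr_K colr_G)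
    qed
  next
    case eG: (G g1 g2 h)
    from sg f show ?thesis
    proof (cases rule: edge_cases)
      case fK: (K g i j)
      show ?thesis using fK(1,5) eG(1,2,3) M[OF eG(2)] by (simp add: colr_K colr_G)
    next
      case fG: (G g1' g2' h')
      obtain x where x: "x \<in> e" "x \<in> f" using ef by auto
      have hh: "h = h'" using x eG(1) fG(1) by auto
      have i: "{g1,g2} \<inter> {g1',g2'} \<noteq> {}" using x eG(1) fG(1) by auto
      have ne: "{g1,g2} \<noteq> {g1',g2'}"
      proof
        assume "{g1,g2} = {g1',g2'}"
        then have "e = f" using eG(1) fG(1) hh by (auto simp: doubleton_eq_iff)
        with ef show False by simp
      qed
      have "c {g1,g2} \<noteq> c {g1',g2'}"
        using pc[unfolded proper_edge_coloring_def, rule_format, OF eG(2) fG(2)] ne i by simp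
      then show ?thesis using eG(1,3) fG(1,3) by (simp add: colr_G)
    qed
  qed
qed

theorem lemma3p4:
  fixes V :: "'a set" and E :: "'a set set" and c :: "'a set \<Rightarrow> real"
    and n r :: nat
  assumes "simple_graph V E"
    and "n \<ge> 1" and "r \<ge> 1"
    and "proper_edge_coloring E c"
  shows "\<exists>c' :: ('a \<times> nat) set \<Rightarrow> real.
           proper_edge_coloring (cart_edges V E (K_verts n) (K_edges n)) c' \<and>
           fdim (W (cart_verts V (K_verts n)) (cart_edges V E (K_verts n) (K_edges n)) c' (int r))
             \<ge> (\<Sum>t = 0..n - 1. fdim (W V E c (int r - int t)))"
proof -
  let ?V' = "cart_verts V (K_verts n)"
  let ?E' = "cart_edges V E (K_verts n) (K_edges n)"
  note sg = assms(1)
  have finV: "finite V" using sg by (simp add: simple_graph_def)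
  have EV: "e \<subseteq> V" if eE: "e \<in> E" for e
  proof -
    obtain u v where "e = {u,v}" "u \<noteq> v" "u \<in> V" "v \<in> V" by (rule E_form[OF sg eE])
    then show ?thesis by simp
  qed
  have finE: "finite E"
    by (rule finite_subset[of E "Pow V"]) (use EV finV in auto)
  have finE': "finite ?E'"
    by (rule finite_subset[of _ "Pow (V \<times> {..<n})"]) (use cart_edges_sub[OF sg] finV in auto)
  define M where "M = (\<Sum>e\<in>E. \<bar>c e\<bar>) + 1"
  have cM: "c e < M" if "e \<in> E" for e
  proof -
    have "\<bar>c e\<bar> \<le> (\<Sum>e\<in>E. \<bar>c e\<bar>)" by (rule member_le_sum) (use that finE in auto)
    then show ?thesis unfolding M_def by linarith
  qed
  define c' where "c' = colr M c"
  have proper: "proper_edge_coloring ?E' c'"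
    unfolding c'_def by (rule colr_proper[OF sg assms(4) cM])
  define Wt where "Wt t = W V E c (int r - int t)" for t
  have Wt_supp: "f x = 0" if "f \<in> Wt t" "x \<notin> E" for t f x
    using that by (auto simp: Wt_def W_def split: if_splits)
  define B where "B t = (if t < r then (SOME B. finite B \<and> B \<subseteq> Wt t \<and> FV.independent B \<and> card B = FV.dim (Wt t)) else {})" for t
  have B: "finite (B t) \<and> B t \<subseteq> Wt t \<and> FV.independent (B t) \<and> card (B t) = fdim (Wt t)" for t
  proof (cases "t < r")
    case True
    obtain B0 where "finite B0" "B0 \<subseteq> Wt t" "FV.independent B0" "Wt t \<subseteq> FV.span B0" "card B0 = FV.dim (Wt t)"
      by (rule fin_supp_basis[of E "Wt t"]) (use finE Wt_supp in auto)
    then have "\<exists>B. finite B \<and> B \<subseteq> Wt t \<and> FV.independent B \<and> card B = FV.dim (Wt t)" by blast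
    from someI_ex[OF this] show ?thesis using True by (simp add: B_def fdim_eq)
  next
    case False
    then have "Wt t = {0}" by (simp add: Wt_def W_def)
    moreover have "FV.dim {0::'a set \<Rightarrow> real} = 0"
      using FV.dim_eq_card[of "{}" "{0::'a set \<Rightarrow> real}"] FV.independent_empty by simp
    ultimately show ?thesis using False FV.independent_empty by (simp add: B_def fdim_eq)
  qed
  define okP where "okP t b P \<longleftrightarrow> (\<forall>v\<in>V. int (degree (P v)) \<le> int r - int t - 1) \<and>
     (\<forall>u v. {u,v} \<in> E \<longrightarrow> poly (P u) (c {u,v}) = b {u,v} \<and> poly (P v) (c {u,v}) = b {u,v})"
    for t b and P :: "'a \<Rightarrow> real poly"
  define Pol where "Pol t b = (SOME P. okP t b P)" for t b
  have Pol: "okP t b (Pol t b)" if "b \<in> B t" for t b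
  proof -
    have tr: "t < r" using that by (simp add: B_def split: if_splits)
    have "b \<in> Wt t" using that B by blast
    then have "\<exists>P. okP t b P" using tr by (simp add: Wt_def W_def okP_def)
    then show ?thesis unfolding Pol_def by (rule someI_ex)
  qed
  have tr: "t < r" if "b \<in> B t" for t b
    using that by (simp add: B_def split: if_splits)
  define R where "R h = smult (real h) [:-(M + real h), 1:]" for h
  have polyR: "poly (R h) x = real h * (x - M - real h)" for h x
    by (simp add: R_def algebra_simps)
  have degR: "degree (R h) \<le> 1" for h
    by (simp add: R_def)
  define Q where "Q t b v = Pol t b (fst v) * R (snd v) ^ t" for t b and v :: "'a \<times> nat"
  have polyQ: "poly (Q t b (g,h)) x = poly (Pol t b g) x * (real h * (x - M - real h)) ^ t" for t b g h x
    by (simp add: Q_def polyR)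
  define \<psi> where "\<psi> tb e' = (if e' \<in> ?E' then poly (Q (fst tb) (snd tb) (SOME u. u \<in> e')) (c' e') else 0)"
    for tb :: "nat \<times> ('a set \<Rightarrow> real)" and e'
  have agree: "poly (Q t b u) (c' {u,v}) = poly (Q t b v) (c' {u,v})"
    if b: "b \<in> B t" and uv: "{u,v} \<in> ?E'" for t b u v
  proof -
    from sg uv show ?thesis
    proof (cases rule: edge_cases)
      case (K g i j)
      have "poly (Q t b (g,i)) (c' {(g,i),(g,j)}) = poly (Q t b (g,j)) (c' {(g,i),(g,j)})"
        using K(5) by (simp add: polyQ c'_def colr_K algebra_simps)
      moreover have "poly (Q t b (g,j)) (c' {(g,j),(g,i)}) = poly (Q t b (g,i)) (c' {(g,j),(g,i)})"
        using calculation by (simp add: insert_commute)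
      ultimately show ?thesis using K(1) by (auto simp: doubleton_eq_iff)
    next
      case (G g1 g2 h)
      have ok: "okP t b (Pol t b)" by (rule Pol[OF b])
      have "poly (Pol t b g1) (c {g1,g2}) = b {g1,g2}" "poly (Pol t b g2) (c {g1,g2}) = b {g1,g2}"
        using ok G(2) unfolding okP_def by blast+
      then have "poly (Q t b (g1,h)) (c' {(g1,h),(g2,h)}) = poly (Q t b (g2,h)) (c' {(g1,h),(g2,h)})"
        using G(3) by (simp add: polyQ c'_def colr_G)
      moreover have "poly (Q t b (g2,h)) (c' {(g2,h),(g1,h)}) = poly (Q t b (g1,h)) (c' {(g2,h),(g1,h)})"
        using calculation by (simp add: insert_commute)
      ultimately show ?thesis using G(1) by (auto simp: doubleton_eq_iff)
    qed
  qed
  have \<psi>_val: "\<psi> (t,b) {u,v} = poly (Q t b u) (c' {u,v})"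
    if b: "b \<in> B t" and uv: "{u,v} \<in> ?E'" for t b u v
  proof -
    have "(SOME w. w \<in> {u,v}) \<in> {u,v}" by (rule someI[of _ u]) simp
    then consider "(SOME w. w \<in> {u,v}) = u" | "(SOME w. w \<in> {u,v}) = v" by blast
    then show ?thesis
      by cases (use agree[OF b uv] uv in \<open>simp_all add: \<psi>_def\<close>)
  qed
  have \<psi>_in: "\<psi> (t,b) \<in> W ?V' ?E' c' (int r)" if b: "b \<in> B t" for t b
  proof -
    have deg: "int (degree (Q t b v)) \<le> int r - 1" if v: "v \<in> ?V'" for v
    proof -
      obtain g h where gh: "v = (g,h)" "g \<in> V" using v by (auto simp: cart_verts_def)
      have "degree (Q t b v) \<le> degree (Pol t b g) + degree (R h ^ t)"
        unfolding Q_def gh by (simp add: degree_mult_le)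
      also have "degree (R h ^ t) \<le> t"
        using order.trans[OF degree_power_le] degR by (metis mult.commute mult_le_mono2 nat_mult_1_right)
      finally have "degree (Q t b v) \<le> degree (Pol t b g) + t" by simp
      moreover have "int (degree (Pol t b g)) \<le> int r - int t - 1"
        using Pol[OF b] gh(2) unfolding okP_def by blast
      ultimately show ?thesis by linarith
    qed
    have interp: "poly (Q t b u) (c' {u,v}) = \<psi> (t,b) {u,v} \<and> poly (Q t b v) (c' {u,v}) = \<psi> (t,b) {u,v}"
      if uv: "{u,v} \<in> ?E'" for u v
      using \<psi>_val[OF b uv] agree[OF b uv] by simp
    have nr: "\<not> int r \<le> 0" using assms(3) by simp
    have s1: "\<forall>e. e \<notin> ?E' \<longrightarrow> \<psi> (t,b) e = 0" by (simp add: \<psi>_def)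
    have s2: "\<exists>P. (\<forall>v\<in>?V'. int (degree (P v)) \<le> int r - 1) \<and>
       (\<forall>u v. {u,v} \<in> ?E' \<longrightarrow> poly (P u) (c' {u,v}) = \<psi> (t,b) {u,v} \<and> poly (P v) (c' {u,v}) = \<psi> (t,b) {u,v})"
      by (rule exI[of _ "Q t b"]) (use deg interp in blast)
    show ?thesis unfolding W_def if_not_P[OF nr] mem_Collect_eq by (rule conjI[OF s1 s2])
  qed
  have \<psi>_G: "\<psi> (t,b) {(g1,h),(g2,h)} = b {g1,g2} * (real h * (c {g1,g2} - M - real h)) ^ t"
    if b: "b \<in> B t" and e: "{g1,g2} \<in> E" and h: "h < n" for t b g1 g2 h
  proof -
    have ne: "g1 \<noteq> g2" using E_edge[OF sg e] by blast
    have "poly (Pol t b g1) (c {g1,g2}) = b {g1,g2}"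
      using Pol[OF b] e unfolding okP_def by blast
    then show ?thesis
      using \<psi>_val[OF b G_edge_in[OF e h]] ne by (simp add: polyQ c'_def colr_G)
  qed
  define I where "I = Sigma {..<n} B"
  have finI: "finite I" unfolding I_def using B by (intro finite_SigmaI) auto
  have indep: "\<forall>i\<in>I. a i = 0" if H: "(\<Sum>i\<in>I. (\<lambda>x. a i * \<psi> i x)) = 0" for a
  proof -
    have d0: "(\<Sum>b\<in>B t. a (t,b) * b e) = 0" if t: "t < n" and e: "e \<in> E" for t e
    proof -
      obtain g1 g2 where g: "e = {g1,g2}" by (rule E_form[OF sg e])
      have eM: "c e < M" using cM[OF e] .
      define y where "y h = real h * (c e - M - real h)" for h
      have inj: "inj_on y {..<n}"
      proof (rule inj_onI, rule ccontr)
        fix h h' assume hh: "h \<in> {..<n}" "h' \<in> {..<n}" "y h = y h'" "h \<noteq> h'"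
        have "(real h - real h') * (c e - M - real h - real h') = 0"
          using hh(3) unfolding y_def by (simp add: algebra_simps)
        then have "c e - M - real h - real h' = 0" using hh(4) by simp
        then show False using eM by simp
      qed
      have vs: "(\<Sum>s<n. (\<Sum>b\<in>B s. a (s,b) * b e) * y h ^ s) = 0" if h: "h < n" for h
      proof -
        have "(\<Sum>i\<in>I. (\<lambda>x. a i * \<psi> i x)) {(g1,h),(g2,h)} = 0" using H by simp
        then have "(\<Sum>i\<in>I. a i * \<psi> i {(g1,h),(g2,h)}) = 0" by (simp add: sum_fun_apply)
        then have "(\<Sum>s<n. \<Sum>b\<in>B s. a (s,b) * \<psi> (s,b) {(g1,h),(g2,h)}) = 0"
        proof -
          have "(\<Sum>s<n. \<Sum>b\<in>B s. a (s,b) * \<psi> (s,b) {(g1,h),(g2,h)}) = (\<Sum>i\<in>I. a i * \<psi> i {(g1,h),(g2,h)})"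
            unfolding I_def using B by (subst sum.Sigma) (auto simp: split_def)
          then show ?thesis using \<open>(\<Sum>i\<in>I. a i * \<psi> i {(g1,h),(g2,h)}) = 0\<close> by simp
        qed
        moreover have "(\<Sum>b\<in>B s. a (s,b) * \<psi> (s,b) {(g1,h),(g2,h)}) = (\<Sum>b\<in>B s. a (s,b) * b e) * y h ^ s" for s
          unfolding sum_distrib_right
          by (rule sum.cong[OF refl]) (use \<psi>_G e g h in \<open>simp add: y_def\<close>)
        ultimately show ?thesis by simp
      qed
      show ?thesis by (rule vandermonde0[OF inj vs t])
    qed
    show ?thesis
    proof
      fix i assume i: "i \<in> I"
      then obtain t b where tb: "i = (t,b)" "t < n" "b \<in> B t" unfolding I_def by blast
      have sum0: "(\<Sum>b'\<in>B t. (\<lambda>x. a (t,b') * b' x)) = 0"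
      proof
        fix x
        show "(\<Sum>b'\<in>B t. (\<lambda>x. a (t,b') * b' x)) x = 0 x"
        proof (cases "x \<in> E")
          case True then show ?thesis using d0[OF tb(2) True] by (simp add: sum_fun_apply)
        next
          case False
          have "b' x = 0" if "b' \<in> B t" for b' using Wt_supp[OF _ False] that B by blast
          then show ?thesis by (simp add: sum_fun_apply sum.neutral)
        qed
      qed
      have "\<not> FV.dependent (B t)" using B by blast
      then have nd: "\<not> (\<exists>u. (\<exists>v\<in>B t. u v \<noteq> 0) \<and> (\<Sum>v\<in>B t. (\<lambda>x. u v * v x)) = 0)"
        using FV.dependent_finite[of "B t"] B by blast
      have "\<not> ((\<exists>v\<in>B t. a (t,v) \<noteq> 0) \<and> (\<Sum>v\<in>B t. (\<lambda>x. a (t,v) * v x)) = 0)"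
        using nd[unfolded not_ex, THEN spec[of _ "\<lambda>b'. a (t,b')"]] by simp
      then have "a (t,b) = 0" using sum0 tb(3) by auto
      then show "a i = 0" using tb(1) by simp
    qed
  qed
  have fi: "FV.independent (\<psi> ` I) \<and> inj_on \<psi> I"
    by (rule fam_indep[OF finI]) (use indep in blast)
  have sub: "\<psi> ` I \<subseteq> W ?V' ?E' c' (int r)"
    using \<psi>_in unfolding I_def by auto
  have "card (\<psi> ` I) \<le> FV.dim (W ?V' ?E' c' (int r))"
    by (rule fin_supp_card_le[of ?E']) (use finE' fi sub assms(3) in \<open>auto simp: W_def\<close>)
  moreover have "card (\<psi> ` I) = card I" using card_image[of \<psi> I] fi by simp
  moreover have "card I = (\<Sum>t<n. card (B t))"
    unfolding I_def using B by (subst card_SigmaI) auto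
  moreover have "{0..n-1} = {..<n}" using assms(2) by auto
  ultimately have "fdim (W ?V' ?E' c' (int r)) \<ge> (\<Sum>t = 0..n - 1. fdim (W V E c (int r - int t)))"
    using B by (simp add: fdim_eq Wt_def)
  with proper show ?thesis by (intro exI[of _ c'] conjI)
qed

end
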